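(* There is an absolute constant $K$ such that for all $\gamma\in(0,1)$ and integers $n\ge p\ge2$, $k\ge1$, $b\ge1$ with $k\le n/b$, $$\mathrm{sens}_{k,b}(C_\gamma^{(p)})\le\begin{cases}K\left(\frac{\sqrt k}{\sqrt{1/2-\gamma}}+\sqrt{\frac kb}\cdot\frac{p^\gamma}{\gamma}\right), & 0<\gamma<\tfrac12,\\[2pt] K\left(\sqrt{k\log p}+\sqrt{\frac{kp}{b}}\right), & \gamma=\tfrac12,\\[2pt] K\left(\frac{\sqrt k\,p^{\gamma-1/2}}{\sqrt{(1-\gamma)(\gamma-1/2)}}+\sqrt{\frac kb}\cdot\frac{p^\gamma}{1-\gamma}\right), & \tfrac12<\gamma<1.\end{cases}$$
   Context: $\log$ is the natural logarithm. $(\tilde c_\gamma)_i:=(-1)^i\binom{\gamma}{i}$ with $\binom{\gamma}{i}=\prod_{j=1}^{i}\frac{\gamma+1-j}{j}$. $C_\gamma^{(p)}$ is the inverse of the $n\times n$ lower-triangular Toeplitz matrix whose $r$-th subdiagonal ($r=0$ the main diagonal) equals $(\tilde c_\gamma)_r$ for $r\le p-1$ and $0$ for $r\ge p$. For an $n\times n$ matrix $C$ and integers $k,b\ge1$ with $(k-1)b\le n-1$, $\mathrm{sens}_{k,b}(C):=\bigl\|\sum_{j=0}^{k-1}C_{[\cdot,jb]}\bigr\|_2$, where $C_{[\cdot,m]}$ is the $m$-th column of $C$ with columns indexed from $0$ (the sensitivity under $b$-min-separated participation with at most $k$ participations). *)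

theory Defs
  imports "HOL-Analysis.Analysis" "Jordan_Normal_Form.Matrix"
begin

definition ctilde :: "real \<Rightarrow> nat \<Rightarrow> real" where
  "ctilde \<gamma> i = (-1) ^ i * (\<gamma> gchoose i)"

definition toep :: "real \<Rightarrow> nat \<Rightarrow> nat \<Rightarrow> real mat" where
  "toep \<gamma> p n = mat n n (\<lambda>(i, j). if j \<le> i \<and> i - j < p then ctilde \<gamma> (i - j) else 0)"

definition Cmat :: "real \<Rightarrow> nat \<Rightarrow> nat \<Rightarrow> real mat" where
  "Cmat \<gamma> p n = (THE C. C \<in> carrier_mat n n \<and> inverts_mat (toep \<gamma> p n) C \<and> inverts_mat C (toep \<gamma> p n))"

definition sens :: "nat \<Rightarrow> nat \<Rightarrow> real mat \<Rightarrow> real" where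
  "sens k b C = sqrt (\<Sum>i<dim_row C. (\<Sum>j<k. C $$ (i, j * b))\<^sup>2)"

end

theory Submission
  imports Defs "HOL-Computational_Algebra.Formal_Power_Series"
begin


lemma ctilde_poch: "ctilde g i = pochhammer (-g) i / fact i"
  unfolding ctilde_def gbinomial_pochhammer by (simp add: power_mult_distrib[symmetric])

lemma ctilde_0[simp]: "ctilde g 0 = 1"
  by (simp add: ctilde_poch)

lemma ctilde_Suc: "ctilde g (Suc i) = ctilde g i * (real i - g) / (real i + 1)"
  unfolding ctilde_poch pochhammer_Suc fact_Suc by (simp add: field_simps)

lemma ctilde_neg: assumes "0 < g" "g < 1" "1 \<le> i" shows "ctilde g i < 0"
  using assms(3)
proof (induction i rule: dec_induct)
  case base then show ?case using assms by (simp add: ctilde_Suc[of g 0, simplified])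
next
  case (step m)
  have "real m - g > 0" using step.hyps assms by linarith
  then show ?case using step.IH by (simp add: ctilde_Suc mult_neg_pos divide_neg_pos)
qed

lemma ctilde_sum: assumes "g \<noteq> 0" shows "(\<Sum>i\<le>m. ctilde g i) = - (real m + 1) / g * ctilde g (Suc m)"
proof (induction m)
  case 0 then show ?case using assms by (simp add: ctilde_Suc[of g 0, simplified])
next
  case (Suc m)
  have "(\<Sum>i\<le>Suc m. ctilde g i) = - (real m + 1) / g * ctilde g (Suc m) + ctilde g (Suc m)"
    using Suc by simp
  also have "\<dots> = - (real (Suc m) + 1) / g * ctilde g (Suc (Suc m))"
  proof -
    define X where "X = ctilde g (Suc m)"
    have h: "real (Suc m) + 1 > 0" by simp
    have h2: "g * real m + g * 2 \<noteq> 0" using assms by (metis distrib_left mult_eq_0_iff of_nat_add of_nat_numeral of_nat_eq_0_iff zero_neq_numeral add_is_0)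
    have "- (real (Suc m) + 1) / g * (X * (real (Suc m) - g) / (real (Suc m) + 1)) = - X * (real (Suc m) - g) / g"
      using h h2 assms by (simp add: field_simps)
    also have "\<dots> = - (real m + 1) / g * X + X" using assms by (simp add: field_simps)
    finally show ?thesis unfolding ctilde_Suc[of g "Suc m"] X_def by simp
  qed
  finally show ?case .
qed

definition aa :: "real \<Rightarrow> nat \<Rightarrow> real" where "aa g i = pochhammer g i / fact i"

lemma aa_0[simp]: "aa g 0 = 1" by (simp add: aa_def)

lemma aa_Suc: "aa g (Suc i) = aa g i * (real i + g) / (real i + 1)"
  unfolding aa_def pochhammer_Suc fact_Suc by (simp add: field_simps)

lemma aa_pos: assumes "0 < g" shows "aa g i > 0"
  by (induction i) (use assms in \<open>auto simp: aa_Suc\<close>)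

lemma aa_gchoose: "aa g i = (-1)^i * ((-g) gchoose i)"
  unfolding aa_def gbinomial_pochhammer by (simp add: power_mult_distrib[symmetric])

lemma conv_full: assumes "n \<ge> 1" shows "(\<Sum>i=0..n. ctilde g i * aa g (n - i)) = 0"
proof -
  have "(\<Sum>i=0..n. ctilde g i * aa g (n - i)) = (\<Sum>i=0..n. (-1)^n * ((g gchoose i) * ((-g) gchoose (n - i))))"
  proof (rule sum.cong[OF refl])
    fix i assume "i \<in> {0..n}"
    then have "(-1::real)^i * (-1)^(n-i) = (-1)^n" by (simp add: power_add[symmetric])
    then show "ctilde g i * aa g (n - i) = (-1)^n * ((g gchoose i) * ((-g) gchoose (n - i)))"
      unfolding ctilde_def aa_gchoose by (metis (no_types, lifting) mult.assoc mult.left_commute)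
  qed
  also have "\<dots> = (-1)^n * ((g + - g) gchoose n)"
    by (simp add: sum_distrib_left[symmetric] gbinomial_Vandermonde)
  also have "\<dots> = 0" using assms by (simp add: gbinomial_0_left)
  finally show ?thesis .
qed

definition tc :: "real \<Rightarrow> nat \<Rightarrow> nat \<Rightarrow> real" where
  "tc g p i = (if i < p then ctilde g i else 0)"
definition Cf :: "real \<Rightarrow> nat \<Rightarrow> real fps" where "Cf g p = Abs_fps (tc g p)"
definition rr :: "real \<Rightarrow> nat \<Rightarrow> nat \<Rightarrow> real" where "rr g p n = fps_nth (inverse (Cf g p)) n"
definition ones :: "real fps" where "ones = Abs_fps (\<lambda>_. 1)"
definition gg :: "real \<Rightarrow> nat \<Rightarrow> nat \<Rightarrow> real" where "gg g p n = fps_nth (Cf g p * ones) n"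
definition ww :: "real \<Rightarrow> nat \<Rightarrow> nat \<Rightarrow> real" where "ww g p n = fps_nth ((1 - fps_X) * inverse (Cf g p)) n"

lemma ones_inv: "ones * (1 - fps_X) = 1"
proof -
  have "ones * inverse ones = 1" by (rule inverse_mult_eq_1') (simp add: ones_def)
  then show ?thesis by (simp add: fps_inverse_gp' ones_def)
qed


lemma young1: fixes y b :: real assumes "0 \<le> y" "y < 1" "0 \<le> b" "b \<le> 1" shows "(1 - y) powr b \<le> 1 - b * y"
  using Youngs_inequality_0[of b "1 - b" "1 - y" 1] assms by (simp add: algebra_simps)

lemma bern2: fixes y b :: real assumes "0 \<le> y" "y < 1" "0 \<le> b" shows "1 + b * y \<le> (1 - y) powr (- b)"
proof -
  have "ln (1 - y) \<le> - y" using ln_le_minus_one[of "1 - y"] assms by simp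
  then have "y \<le> - ln (1 - y)" by linarith
  then have "b * y \<le> b * (- ln (1 - y))" using assms(3) by (rule mult_left_mono)
  then have "b * y \<le> - b * ln (1 - y)" by simp
  also have "1 + - b * ln (1 - y) \<le> exp (- b * ln (1 - y))" by (rule exp_ge_add_one_self)
  ultimately show ?thesis using assms by (simp add: powr_def)
qed

lemma bern3: fixes z b :: real assumes "0 \<le> z" "0 \<le> b" shows "1 - b * z \<le> (1 + z) powr (- b)"
proof -
  have "ln (1 + z) \<le> z" using ln_le_minus_one[of "1 + z"] assms by simp
  then have "- b * z \<le> - b * ln (1 + z)" using assms(2) by (simp add: mult_left_mono)
  also have "1 + - b * ln (1 + z) \<le> exp (- b * ln (1 + z))" by (rule exp_ge_add_one_self)
  ultimately show ?thesis using assms by (simp add: powr_def)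
qed

lemma powr_split: fixes x s :: real assumes "x > 1" shows "(x - 1) powr s = x powr s * (1 - 1 / x) powr s"
proof -
  have "x - 1 = x * (1 - 1 / x)" using assms by (simp add: field_simps)
  then show ?thesis using assms by (simp add: powr_mult)
qed

lemma tele: fixes x s :: real assumes "s \<noteq> 0" "s < 1" "x > 1" shows "x powr (s - 1) \<le> (x powr s - (x - 1) powr s) / s"
proof -
  have xs: "x powr (s - 1) = x powr s / x" using assms by (simp add: powr_diff)
  have y: "0 \<le> 1 / x" "1 / x < 1" using assms by auto
  show ?thesis
  proof (cases "s > 0")
    case True
    have "(1 - 1 / x) powr s \<le> 1 - s * (1 / x)" using young1[OF y] True assms by simp
    then have "(x - 1) powr s \<le> x powr s * (1 - s / x)"
      using powr_split[OF assms(3)] by (simp add: mult_left_mono)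
    then have "s * (x powr s / x) \<le> x powr s - (x - 1) powr s" by (simp add: algebra_simps)
    then show ?thesis using True xs by (simp add: field_simps)
  next
    case False
    then have sn: "s < 0" using assms by simp
    have "1 + (- s) * (1 / x) \<le> (1 - 1 / x) powr (- (- s))" using bern2[OF y, of "- s"] sn by simp
    then have "x powr s * (1 - s / x) \<le> (x - 1) powr s"
      using powr_split[OF assms(3)] by (simp add: mult_left_mono)
    then have "(- s) * (x powr s / x) \<le> (x - 1) powr s - x powr s" by (simp add: algebra_simps)
    then show ?thesis using sn xs by (simp add: field_simps)
  qed
qed

lemma tele0: fixes x :: real assumes "x > 1" shows "1 / x \<le> ln x - ln (x - 1)"
proof -
  have "ln (1 - 1 / x) \<le> - (1 / x)" using ln_le_minus_one[of "1 - 1/x"] assms by simp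
  moreover have "ln (x - 1) = ln x + ln (1 - 1 / x)"
  proof -
    have "x - 1 = x * (1 - 1 / x)" using assms by (simp add: field_simps)
    then have "ln (x - 1) = ln (x * (1 - 1 / x))" by simp
    also have "\<dots> = ln x + ln (1 - 1 / x)" using assms by (intro ln_mult_pos) auto
    finally show ?thesis .
  qed
  ultimately show ?thesis by simp
qed

lemma psum_bound: fixes s :: real assumes "s \<noteq> 0" "s < 1" "1 \<le> P"
  shows "(\<Sum>m<P. real (Suc m) powr (s - 1)) \<le> 1 + (real P powr s - 1) / s"
  using assms(3)
proof (induction P rule: dec_induct)
  case base then show ?case by simp
next
  case (step P)
  have "real (Suc P) powr (s - 1) \<le> (real (Suc P) powr s - (real (Suc P) - 1) powr s) / s"
    using tele[OF assms(1,2), of "real (Suc P)"] step.hyps by simp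
  then have "real (Suc P) powr (s - 1) \<le> (real (Suc P) powr s - real P powr s) / s" by simp
  then show ?case using step.IH by (simp add: diff_divide_distrib)
qed

lemma psum_bound0: assumes "1 \<le> P"
  shows "(\<Sum>m<P. real (Suc m) powr (- 1)) \<le> 1 + ln (real P)"
  using assms
proof (induction P rule: dec_induct)
  case base then show ?case by simp
next
  case (step P)
  have "1 / real (Suc P) \<le> ln (real (Suc P)) - ln (real (Suc P) - 1)"
    using tele0[of "real (Suc P)"] step.hyps by simp
  then have "real (Suc P) powr (-1) \<le> ln (real (Suc P)) - ln (real P)" by (simp add: powr_minus_divide)
  then show ?case using step.IH by simp
qed

lemma aa_upper: assumes "0 < g" "g < 1" shows "aa g i \<le> real (Suc i) powr (g - 1)"
proof (induction i)
  case 0 then show ?case by simp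
next
  case (Suc i)
  have pos: "0 < real (Suc i)" by simp
  have "aa g (Suc i) = aa g i * (1 - (1 - g) * (1 / real (Suc i)))"
    by (simp add: aa_Suc field_simps)
  also have "\<dots> \<le> real (Suc i) powr (g - 1) * (1 + 1 / real (Suc i)) powr (- (1 - g))"
  proof (rule mult_mono)
    show "aa g i \<le> real (Suc i) powr (g - 1)" by (rule Suc)
    show "1 - (1 - g) * (1 / real (Suc i)) \<le> (1 + 1 / real (Suc i)) powr (- (1 - g))"
      by (rule bern3) (use assms in auto)
    show "0 \<le> real (Suc i) powr (g - 1)" by simp
    show "0 \<le> 1 - (1 - g) * (1 / real (Suc i))" using assms by (simp add: field_simps)
  qed
  also have "(1 + 1 / real (Suc i)) = real (Suc (Suc i)) / real (Suc i)" by (simp add: field_simps)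
  also have "real (Suc i) powr (g - 1) * (real (Suc (Suc i)) / real (Suc i)) powr (- (1 - g))
      = real (Suc (Suc i)) powr (g - 1)"
    by (simp add: powr_divide powr_minus_divide divide_simps powr_diff powr_add)
  finally show ?case .
qed


lemma conv_reduce:
  fixes A B :: "nat \<Rightarrow> real"
  assumes "i < n"
  shows "(\<Sum>l\<in>{0..<n}. (if l \<le> i then A (i - l) else 0) * (if j \<le> l then B (l - j) else 0))
       = (if j \<le> i then (\<Sum>s=0..i-j. A (i - j - s) * B s) else 0)"
proof -
  have "(\<Sum>l\<in>{0..<n}. (if l \<le> i then A (i - l) else 0) * (if j \<le> l then B (l - j) else 0))
      = (\<Sum>l\<in>{0..<n}. if l \<in> {j..i} then A (i - l) * B (l - j) else 0)"
    by (intro sum.cong) auto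
  also have "\<dots> = (\<Sum>l\<in>{0..<n} \<inter> {j..i}. A (i - l) * B (l - j))"
    by (simp add: sum.inter_restrict)
  also have "{0..<n} \<inter> {j..i} = {j..i}" using assms by auto
  finally have e: "(\<Sum>l\<in>{0..<n}. (if l \<le> i then A (i - l) else 0) * (if j \<le> l then B (l - j) else 0))
      = (\<Sum>l\<in>{j..i}. A (i - l) * B (l - j))" .
  show ?thesis
  proof (cases "j \<le> i")
    case True
    have "(\<Sum>l\<in>{j..i}. A (i - l) * B (l - j)) = (\<Sum>l\<in>{0 + j..(i - j) + j}. A (i - l) * B (l - j))"
      using True by simp
    also have "\<dots> = (\<Sum>s=0..i-j. A (i - (s + j)) * B (s + j - j))"
      by (rule sum.shift_bounds_cl_nat_ivl)
    also have "\<dots> = (\<Sum>s=0..i-j. A (i - j - s) * B s)"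
      by (intro sum.cong refl) (simp add: add.commute)
    finally show ?thesis using e True by simp
  next
    case False then show ?thesis using e by simp
  qed
qed

definition Mr :: "real \<Rightarrow> nat \<Rightarrow> nat \<Rightarrow> real mat" where
  "Mr g p n = mat n n (\<lambda>(i, j). if j \<le> i then rr g p (i - j) else 0)"


lemma sq_le:
  fixes x :: "nat \<Rightarrow> real"
  assumes "\<And>j. 0 \<le> x j"
  shows "(\<Sum>j<k. x j)\<^sup>2 \<le> 2 * (\<Sum>j<k. x j * (\<Sum>j'<Suc j. x j'))"
proof (induction k)
  case 0 then show ?case by simp
next
  case (Suc k)
  define S where "S = (\<Sum>j<k. x j)"
  have "(\<Sum>j<Suc k. x j)\<^sup>2 = S\<^sup>2 + 2 * x k * S + (x k)\<^sup>2" by (simp add: S_def power2_eq_square algebra_simps)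
  also have "\<dots> \<le> 2 * (\<Sum>j<k. x j * (\<Sum>j'<Suc j. x j')) + 2 * x k * S + 2 * (x k)\<^sup>2"
    using Suc.IH zero_le_power2[of "x k"] unfolding S_def by linarith
  also have "\<dots> = 2 * (\<Sum>j<Suc k. x j * (\<Sum>j'<Suc j. x j'))"
    by (simp add: S_def power2_eq_square algebra_simps)
  finally show ?case .
qed

lemma shift_sum_le:
  fixes psi :: "nat \<Rightarrow> real"
  assumes "\<And>m. 0 \<le> psi m"
  shows "(\<Sum>i<n. if c \<le> i then psi (i - c) else 0) \<le> (\<Sum>m<n. psi m)"
proof -
  have "(\<Sum>i<n. if c \<le> i then psi (i - c) else 0) = (\<Sum>i\<in>{..<n} \<inter> {c..}. psi (i - c))"
    by (simp add: sum.inter_restrict)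
  also have "\<dots> = (\<Sum>m\<in>(\<lambda>i. i - c) ` ({..<n} \<inter> {c..}). psi m)"
    by (rule sum.reindex[symmetric, unfolded comp_def]) (auto simp: inj_on_def)
  also have "\<dots> \<le> (\<Sum>m<n. psi m)"
    by (rule sum_mono2) (auto simp: assms)
  finally show ?thesis .
qed


context
  fixes g :: real and p :: nat
  assumes g0: "0 < g" and g1: "g < 1" and p2: "2 \<le> p"
begin

lemma Cf0: "fps_nth (Cf g p) 0 = 1" using p2 by (simp add: Cf_def tc_def)

lemma CR: "Cf g p * inverse (Cf g p) = 1" by (rule inverse_mult_eq_1') (simp add: Cf0)

lemma rr_conv: "(\<Sum>i=0..n. tc g p i * rr g p (n - i)) = (if n = 0 then 1 else 0)"
proof -
  have "fps_nth (Cf g p * inverse (Cf g p)) n = (if n = 0 then 1 else 0)" by (simp add: CR)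
  then show ?thesis by (simp add: fps_mult_nth Cf_def rr_def)
qed

lemma tc0: "tc g p 0 = 1" using p2 by (simp add: tc_def)

lemma rr0: "rr g p 0 = 1" using rr_conv[of 0] by (simp add: tc0)

lemma rr_rec: assumes "n \<ge> 1" shows "rr g p n = (\<Sum>i=1..n. (- tc g p i) * rr g p (n - i))"
proof -
  have "(\<Sum>i=0..n. tc g p i * rr g p (n - i)) = tc g p 0 * rr g p n + (\<Sum>i=1..n. tc g p i * rr g p (n - i))"
    by (simp add: sum.atLeast_Suc_atMost)
  then show ?thesis using rr_conv[of n] assms by (simp add: tc0 sum_negf)
qed

lemma aa_rec: assumes "n \<ge> 1" shows "aa g n = (\<Sum>i=1..n. (- ctilde g i) * aa g (n - i))"
proof -
  have "(\<Sum>i=0..n. ctilde g i * aa g (n - i)) = aa g n + (\<Sum>i=1..n. ctilde g i * aa g (n - i))"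
    by (simp add: sum.atLeast_Suc_atMost)
  then show ?thesis using conv_full[OF assms] by (simp add: sum_negf)
qed

lemma tc_bounds: assumes "1 \<le> i" shows "0 \<le> - tc g p i" "- tc g p i \<le> - ctilde g i"
  using ctilde_neg[OF g0 g1 assms] by (auto simp: tc_def)

lemma rr_nonneg_le: "0 \<le> rr g p n \<and> rr g p n \<le> aa g n"
proof (induction n rule: less_induct)
  case (less n)
  show ?case
  proof (cases "n = 0")
    case True then show ?thesis by (simp add: rr0)
  next
    case False
    then have n1: "n \<ge> 1" by simp
    have "0 \<le> (\<Sum>i=1..n. (- tc g p i) * rr g p (n - i))"
    proof (rule sum_nonneg)
      fix i assume i: "i \<in> {1..n}"
      then have "n - i < n" by auto
      then show "0 \<le> (- tc g p i) * rr g p (n - i)"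
        using less.IH[of "n-i"] tc_bounds[of i] i by (auto simp: mult_nonpos_nonneg)
    qed
    moreover have "(\<Sum>i=1..n. (- tc g p i) * rr g p (n - i)) \<le> (\<Sum>i=1..n. (- ctilde g i) * aa g (n - i))"
    proof (rule sum_mono)
      fix i assume i: "i \<in> {1..n}"
      then have "n - i < n" by auto
      then have "0 \<le> rr g p (n - i)" "rr g p (n - i) \<le> aa g (n - i)" using less.IH[of "n-i"] by auto
      moreover have "0 \<le> - tc g p i" "- tc g p i \<le> - ctilde g i" using tc_bounds[of i] i by auto
      ultimately show "(- tc g p i) * rr g p (n - i) \<le> (- ctilde g i) * aa g (n - i)"
        by (meson mult_mono order_trans)
    qed
    ultimately show ?thesis using rr_rec[OF n1] aa_rec[OF n1] by simp
  qed
qed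


lemma gg_sum: "gg g p n = (\<Sum>i=0..n. tc g p i)"
  by (simp add: gg_def fps_mult_nth Cf_def ones_def)

lemma gg0: "gg g p 0 = 1" by (simp add: gg_sum tc0)

lemma gg_Suc: "gg g p (Suc m) = gg g p m + tc g p (Suc m)"
  by (simp add: gg_sum)

definition rho :: "nat \<Rightarrow> real" where "rho m = (if Suc m < p then 1 - g / (real m + 1) else 1)"

lemma gg_Suc': "gg g p (Suc m) = gg g p m * rho m"
proof (cases "Suc m < p")
  case True
  have "gg g p m = (\<Sum>i\<le>m. ctilde g i)"
    unfolding gg_sum atLeast0AtMost using True by (intro sum.cong) (auto simp: tc_def)
  also have "\<dots> = - (real m + 1) / g * ctilde g (Suc m)" using ctilde_sum g0 by simp
  finally have "ctilde g (Suc m) = - g / (real m + 1) * gg g p m" using g0 by (simp add: field_simps)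
  then show ?thesis using True by (simp add: gg_Suc tc_def rho_def algebra_simps)
next
  case False then show ?thesis by (simp add: gg_Suc tc_def rho_def)
qed

lemma rho_pos: "0 < rho m" using g1 by (auto simp: rho_def field_simps)
lemma rho_le1: "rho m \<le> 1" using g0 by (auto simp: rho_def)
lemma rho_mono: assumes "m \<le> m'" shows "rho m \<le> rho m'"
proof (cases "Suc m' < p")
  case True
  then have "Suc m < p" using assms by simp
  moreover have "g / (real m' + 1) \<le> g / (real m + 1)"
    using assms g0 by (intro divide_left_mono) auto
  ultimately show ?thesis using True by (simp add: rho_def)
next
  case False then show ?thesis using rho_le1[of m] by (simp add: rho_def)
qed

lemma gg_pos: "0 < gg g p m"
  by (induction m) (auto simp: gg0 gg_Suc' rho_pos)

lemma gg_decr: "gg g p (Suc m) \<le> gg g p m"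
  using gg_pos[of m] rho_le1[of m] by (simp add: gg_Suc' mult_left_le)

lemma gg_const: "p - 1 \<le> m \<Longrightarrow> gg g p m = gg g p (p - 1)"
proof (induction m rule: dec_induct)
  case base then show ?case by simp
next
  case (step m) then show ?case by (simp add: gg_Suc' rho_def)
qed

lemma gg_ge_last: "gg g p (p - 1) \<le> gg g p m"
proof (cases "m \<le> p - 1")
  case True
  have "antimono (gg g p)" using gg_decr by (simp add: antimono_iff_le_Suc)
  then show ?thesis using True by (simp add: antimono_def)
next
  case False then show ?thesis using gg_const[of m] by simp
qed

lemma ww_eq: "ww g p n = rr g p n - (if n = 0 then 0 else rr g p (n - 1))"
  by (simp add: ww_def rr_def algebra_simps)

lemma ww_conv: "(\<Sum>k=0..n. ww g p k * gg g p (n - k)) = (if n = 0 then 1 else 0)"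
proof -
  have "((1 - fps_X) * inverse (Cf g p)) * (Cf g p * ones) = (Cf g p * inverse (Cf g p)) * (ones * (1 - fps_X))"
    by (simp add: algebra_simps)
  also have "\<dots> = 1" by (simp add: CR ones_inv)
  finally have "fps_nth (((1 - fps_X) * inverse (Cf g p)) * (Cf g p * ones)) n = (if n = 0 then 1 else 0)"
    by simp
  then show ?thesis by (simp only: fps_mult_nth ww_def gg_def)
qed

lemma rr_gg_conv: "(\<Sum>k=0..n. rr g p k * gg g p (n - k)) = 1"
proof -
  have "inverse (Cf g p) * (Cf g p * ones) = (Cf g p * inverse (Cf g p)) * ones"
    by (simp add: algebra_simps)
  also have "\<dots> = ones" by (simp add: CR)
  finally have eq: "inverse (Cf g p) * (Cf g p * ones) = ones" .
  have "fps_nth (inverse (Cf g p) * (Cf g p * ones)) n = fps_nth ones n"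
    by (simp only: eq)
  then have "fps_nth (inverse (Cf g p) * (Cf g p * ones)) n = 1" by (simp add: ones_def)
  then show ?thesis by (simp only: fps_mult_nth rr_def gg_def)
qed

lemma ww0: "ww g p 0 = 1" by (simp add: ww_eq rr0)

lemma kaluza: "ww g p (Suc n) \<le> 0"
proof (induction n rule: less_induct)
  case (less n)
  show ?case
  proof (cases "n = 0")
    case True
    have "(\<Sum>k=0..1. ww g p k * gg g p (1 - k)) = 0" using ww_conv[of 1] by simp
    then have "ww g p 1 = - gg g p 1" by (simp add: ww0 gg0)
    then show ?thesis using True gg_pos[of 1] by simp
  next
    case False
    have E1: "(\<Sum>k=0..n. ww g p k * gg g p (n - k)) = 0" using ww_conv[of n] False by simp
    have E2: "(\<Sum>k=0..n. ww g p k * gg g p (Suc n - k)) + ww g p (Suc n) = 0"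
      using ww_conv[of "Suc n"] by (simp add: gg0)
    have "gg g p n * ww g p (Suc n) = gg g p (Suc n) * (\<Sum>k=0..n. ww g p k * gg g p (n - k))
            - gg g p n * (\<Sum>k=0..n. ww g p k * gg g p (Suc n - k))"
    proof -
      have w: "ww g p (Suc n) = - (\<Sum>k=0..n. ww g p k * gg g p (Suc n - k))" using E2 by linarith
      show ?thesis using E1 w by simp
    qed
    also have "\<dots> = (\<Sum>k=0..n. ww g p k * (gg g p (Suc n) * gg g p (n - k) - gg g p (Suc n - k) * gg g p n))"
      by (simp add: sum_distrib_left sum_subtractf[symmetric] algebra_simps)
    also have "\<dots> \<le> 0"
    proof (rule sum_nonpos)
      fix k assume k: "k \<in> {0..n}"
      show "ww g p k * (gg g p (Suc n) * gg g p (n - k) - gg g p (Suc n - k) * gg g p n) \<le> 0"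
      proof (cases "k = 0")
        case True then show ?thesis by simp
      next
        case False
        then obtain k' where k': "k = Suc k'" "k' < n" using k by (cases k) auto
        have w: "ww g p k \<le> 0" using less.IH[OF k'(2)] k'(1) by simp
        have "Suc n - k = Suc (n - k)" using k False by simp
        then have "gg g p (Suc n) * gg g p (n - k) - gg g p (Suc n - k) * gg g p n
              = gg g p n * gg g p (n - k) * (rho n - rho (n - k))"
          by (simp add: gg_Suc' algebra_simps)
        moreover have "0 \<le> gg g p n * gg g p (n - k) * (rho n - rho (n - k))"
          using gg_pos[of n] gg_pos[of "n-k"] rho_mono[of "n-k" n] by simp
        ultimately show ?thesis using w by (simp add: mult_nonpos_nonneg)
      qed
    qed
    finally have "gg g p n * ww g p (Suc n) \<le> 0" .
    then show ?thesis using gg_pos[of n] by (simp add: mult_le_0_iff)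
  qed
qed

lemma rr_mono_Suc: "rr g p (Suc n) \<le> rr g p n"
  using kaluza[of n] by (simp add: ww_eq)

lemma rr_antimono: "m \<le> m' \<Longrightarrow> rr g p m' \<le> rr g p m"
  using rr_mono_Suc by (metis antimono_iff_le_Suc antimonoD)

lemma rr_nonneg: "0 \<le> rr g p n" using rr_nonneg_le by simp
lemma rr_le_aa: "rr g p n \<le> aa g n" using rr_nonneg_le by simp

lemma rr_sum_le: "(\<Sum>k=0..n. rr g p k) \<le> 1 / gg g p (p - 1)"
proof -
  have "gg g p (p - 1) * (\<Sum>k=0..n. rr g p k) = (\<Sum>k=0..n. rr g p k * gg g p (p - 1))"
    by (simp add: sum_distrib_left sum_distrib_right mult.commute)
  also have "\<dots> \<le> (\<Sum>k=0..n. rr g p k * gg g p (n - k))"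
    by (rule sum_mono) (rule mult_left_mono[OF gg_ge_last rr_nonneg])
  also have "\<dots> = 1" by (rule rr_gg_conv)
  finally show ?thesis using gg_pos[of "p-1"] by (simp add: field_simps)
qed

lemma rr_sum_lt: "(\<Sum>k<N. rr g p k) \<le> 1 / gg g p (p - 1)"
proof (cases N)
  case 0 then show ?thesis using gg_pos[of "p-1"] by simp
next
  case (Suc M)
  then have "{..<N} = {0..M}" by auto
  then show ?thesis using rr_sum_le[of M] by simp
qed


lemma gg_lower: assumes "1 \<le> m" "m \<le> p - 1" shows "(1 - g) * real m powr (- g) \<le> gg g p m"
  using assms
proof (induction m rule: dec_induct)
  case base
  have "gg g p 1 = 1 - g" using p2 by (simp add: gg_Suc'[of 0, simplified] gg0 rho_def)
  then show ?case by simp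
next
  case (step m)
  have m1: "Suc m < p" using step by simp
  have mpos: "0 < real m" using step.hyps by simp
  have "(1 - g) * real (Suc m) powr (- g) = (1 - g) * real m powr (- g) * (1 - 1 / real (Suc m)) powr g"
  proof -
    have "(1 - 1 / real (Suc m)) = real m / real (Suc m)" by (simp add: field_simps)
    then have e: "(1 - 1 / real (Suc m)) powr g = real m powr g / real (Suc m) powr g"
      by (simp add: powr_divide)
    have A: "real m powr g > 0" using mpos by simp
    have "(1 - g) * (1 / real (Suc m) powr g) = (1 - g) * (1 / real m powr g) * (real m powr g / real (Suc m) powr g)"
      using A by (simp add: field_simps)
    then show ?thesis by (simp only: e powr_minus_divide)
  qed
  also have "\<dots> \<le> gg g p m * (1 - g * (1 / real (Suc m)))"
  proof (rule mult_mono)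
    show "(1 - g) * real m powr (- g) \<le> gg g p m" using step by simp
    show "(1 - 1 / real (Suc m)) powr g \<le> 1 - g * (1 / real (Suc m))"
      by (rule young1) (use g0 g1 mpos in auto)
    show "0 \<le> gg g p m" using gg_pos[of m] by simp
    show "0 \<le> (1 - 1 / real (Suc m)) powr g" by simp
  qed
  also have "\<dots> = gg g p (Suc m)" using m1 by (simp add: gg_Suc' rho_def)
  finally show ?case .
qed

lemma L_bound: "1 / gg g p (p - 1) \<le> real p powr g / (1 - g)"
proof -
  have "(1 - g) * real (p - 1) powr (- g) \<le> gg g p (p - 1)" using gg_lower[of "p-1"] p2 by simp
  moreover have "real p powr (- g) \<le> real (p - 1) powr (- g)"
    by (rule powr_mono2') (use g0 p2 in auto)
  ultimately have le: "(1 - g) * real p powr (- g) \<le> gg g p (p - 1)"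
    using g1 by (smt (verit) mult_left_mono)
  have pos: "0 < (1 - g) * real p powr (- g)" using g1 p2 by simp
  have "1 / gg g p (p - 1) \<le> 1 / ((1 - g) * real p powr (- g))"
    by (rule divide_left_mono[OF le]) (use pos gg_pos[of "p-1"] in auto)
  also have "\<dots> = real p powr g / (1 - g)" by (simp add: powr_minus field_simps)
  finally show ?thesis .
qed

lemma rr_tail: assumes "p \<le> Suc m" shows "rr g p m \<le> real p powr (g - 1)"
proof -
  have "rr g p m \<le> real (Suc m) powr (g - 1)" using rr_le_aa aa_upper[OF g0 g1] order_trans by blast
  also have "\<dots> \<le> real p powr (g - 1)" by (rule powr_mono2') (use g1 p2 assms in auto)
  finally show ?thesis .
qed

lemma rr_head: "rr g p m \<le> real (Suc m) powr (g - 1)"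
  using rr_le_aa aa_upper[OF g0 g1] order_trans by blast


lemma rr_conv': "(\<Sum>s=0..d. tc g p (d - s) * rr g p s) = (if d = 0 then 1 else 0)"
proof -
  have eq: "inverse (Cf g p) * Cf g p = 1" by (rule inverse_mult_eq_1) (simp add: Cf0)
  have "(\<Sum>s=0..d. tc g p (d - s) * rr g p s) = (\<Sum>s=0..d. fps_nth (inverse (Cf g p)) s * fps_nth (Cf g p) (d - s))"
    by (intro sum.cong refl) (simp add: rr_def Cf_def)
  also have "\<dots> = fps_nth (inverse (Cf g p) * Cf g p) d" by (simp only: fps_mult_nth)
  also have "\<dots> = (if d = 0 then 1 else 0)" by (simp only: eq fps_one_nth)
  finally show ?thesis .
qed

lemma toep_dims[simp]: "dim_row (toep g p n) = n" "dim_col (toep g p n) = n"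
  by (simp_all add: toep_def)
lemma Mr_dims[simp]: "dim_row (Mr g p n) = n" "dim_col (Mr g p n) = n"
  by (simp_all add: Mr_def)

lemma rr_conv'': "(\<Sum>s=0..d. rr g p (d - s) * tc g p s) = (if d = 0 then 1 else 0)"
  using rr_conv[of d] by (simp add: mult.commute)

lemma toep_entry: "i < n \<Longrightarrow> j < n \<Longrightarrow> toep g p n $$ (i, j) = (if j \<le> i then tc g p (i - j) else 0)"
  by (simp add: toep_def tc_def)

lemma TM: "toep g p n * Mr g p n = 1\<^sub>m n"
proof (rule eq_matI)
  fix i j assume i: "i < dim_row (1\<^sub>m n :: real mat)" and j: "j < dim_col (1\<^sub>m n :: real mat)"
  then have i': "i < n" and j': "j < n" by auto
  have "(toep g p n * Mr g p n) $$ (i, j)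
     = (\<Sum>l\<in>{0..<n}. (if l \<le> i then tc g p (i - l) else 0) * (if j \<le> l then rr g p (l - j) else 0))"
    using i' j' by (simp add: scalar_prod_def toep_entry Mr_def)
  also have "\<dots> = (if i = j then 1 else 0)"
    unfolding conv_reduce[OF i'] using rr_conv'[of "i-j"] by (auto simp: tc0 rr0)
  finally show "(toep g p n * Mr g p n) $$ (i, j) = 1\<^sub>m n $$ (i, j)" using i' j' by simp
qed (auto simp: toep_def Mr_def)

lemma MT: "Mr g p n * toep g p n = 1\<^sub>m n"
proof (rule eq_matI)
  fix i j assume i: "i < dim_row (1\<^sub>m n :: real mat)" and j: "j < dim_col (1\<^sub>m n :: real mat)"
  then have i': "i < n" and j': "j < n" by auto
  have "(Mr g p n * toep g p n) $$ (i, j)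
     = (\<Sum>l\<in>{0..<n}. (if l \<le> i then rr g p (i - l) else 0) * (if j \<le> l then tc g p (l - j) else 0))"
    using i' j' by (simp add: scalar_prod_def toep_entry Mr_def)
  also have "\<dots> = (if i = j then 1 else 0)"
    unfolding conv_reduce[OF i'] using rr_conv''[of "i-j"] by (auto simp: tc0 rr0)
  finally show "(Mr g p n * toep g p n) $$ (i, j) = 1\<^sub>m n $$ (i, j)" using i' j' by simp
qed (auto simp: toep_def Mr_def)

lemma Cmat_eq: "Cmat g p n = Mr g p n"
  unfolding Cmat_def
proof (rule the_equality)
  show "Mr g p n \<in> carrier_mat n n \<and> inverts_mat (toep g p n) (Mr g p n) \<and> inverts_mat (Mr g p n) (toep g p n)"
    using TM MT by (simp add: inverts_mat_def Mr_def toep_def)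
next
  fix C assume C: "C \<in> carrier_mat n n \<and> inverts_mat (toep g p n) C \<and> inverts_mat C (toep g p n)"
  have T: "toep g p n \<in> carrier_mat n n" by (simp add: toep_def)
  have M: "Mr g p n \<in> carrier_mat n n" by (simp add: Mr_def)
  have dC: "dim_row C = n" "dim_col C = n" using C by auto
  have CT: "C * toep g p n = 1\<^sub>m n" using C dC by (simp add: inverts_mat_def)
  have "C = C * (toep g p n * Mr g p n)" using dC by (simp add: TM)
  also have "\<dots> = (C * toep g p n) * Mr g p n" using assoc_mult_mat[of C n n "toep g p n" n "Mr g p n" n] C T M by simp
  also have "\<dots> = Mr g p n" using CT M by simp
  finally show "C = Mr g p n" .
qed


lemma stride_sum: "real b * (\<Sum>d<j. rr g p (m + Suc d * b)) \<le> (\<Sum>t\<in>{Suc m..<Suc m + j * b}. rr g p t)"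
proof (induction j)
  case 0 then show ?case by simp
next
  case (Suc j)
  have "real b * rr g p (m + Suc j * b) \<le> (\<Sum>t\<in>{Suc m + j * b..<Suc m + Suc j * b}. rr g p t)"
  proof -
    have "real (card {Suc m + j * b..<Suc m + Suc j * b}) * rr g p (m + Suc j * b)
        \<le> (\<Sum>t\<in>{Suc m + j * b..<Suc m + Suc j * b}. rr g p t)"
      by (rule sum_bounded_below) (auto intro!: rr_antimono)
    then show ?thesis by simp
  qed
  moreover have "(\<Sum>t\<in>{Suc m..<Suc m + j * b}. rr g p t) + (\<Sum>t\<in>{Suc m + j * b..<Suc m + Suc j * b}. rr g p t)
      = (\<Sum>t\<in>{Suc m..<Suc m + Suc j * b}. rr g p t)"
    by (rule sum.atLeastLessThan_concat) auto
  ultimately show ?case using Suc by (simp add: algebra_simps)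
qed

lemma stride_bound: assumes "1 \<le> b"
  shows "(\<Sum>d<Suc j. rr g p (m + d * b)) \<le> rr g p m + (1 / gg g p (p - 1)) / real b"
proof -
  have E: "(\<Sum>d<Suc j. rr g p (m + d * b)) = rr g p m + (\<Sum>d<j. rr g p (m + Suc d * b))"
    unfolding sum.lessThan_Suc_shift by simp
  have "real b * (\<Sum>d<j. rr g p (m + Suc d * b)) \<le> 1 / gg g p (p - 1)"
  proof -
    have "(\<Sum>t\<in>{Suc m..<Suc m + j * b}. rr g p t) \<le> (\<Sum>t<Suc m + j * b. rr g p t)"
      by (rule sum_mono2) (auto simp: rr_nonneg)
    then show ?thesis using stride_sum[of b m j] rr_sum_lt[of "Suc m + j * b"] by linarith
  qed
  moreover have bpos: "0 < real b" using assms by simp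
  ultimately have "(\<Sum>d<j. rr g p (m + Suc d * b)) \<le> (1 / gg g p (p - 1)) / real b"
    by (metis mult.commute pos_le_divide_eq)
  with E show ?thesis by linarith
qed

definition xx :: "nat \<Rightarrow> nat \<Rightarrow> nat \<Rightarrow> real" where
  "xx b i j = (if j * b \<le> i then rr g p (i - j * b) else 0)"

lemma xx_nonneg: "0 \<le> xx b i j" by (simp add: xx_def rr_nonneg)

lemma inner_bound: assumes "1 \<le> b" "j * b \<le> i"
  shows "(\<Sum>j'<Suc j. xx b i j') \<le> rr g p (i - j * b) + (1 / gg g p (p - 1)) / real b"
proof -
  have "(\<Sum>j'<Suc j. xx b i j') = (\<Sum>d<Suc j. xx b i (Suc j - Suc d))"
    by (rule sum.nat_diff_reindex[symmetric])
  also have "\<dots> = (\<Sum>d<Suc j. rr g p (i - j * b + d * b))"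
  proof (intro sum.cong refl)
    fix d assume "d \<in> {..<Suc j}"
    then have d: "d \<le> j" by simp
    have "(j - d) * b \<le> j * b" by simp
    then have le: "(j - d) * b \<le> i" using assms by linarith
    have "(j - d) * b = j * b - d * b" by (simp add: diff_mult_distrib)
    moreover have "d * b \<le> j * b" using d by simp
    ultimately have "i - (j - d) * b = i - j * b + d * b" using assms by simp
    then show "xx b i (Suc j - Suc d) = rr g p (i - j * b + d * b)" using le by (simp add: xx_def)
  qed
  also have "\<dots> \<le> rr g p (i - j * b) + (1 / gg g p (p - 1)) / real b"
    by (rule stride_bound[OF assms(1)])
  finally show ?thesis .
qed

lemma per_i: assumes "1 \<le> b"
  shows "(\<Sum>j<k. xx b i j)\<^sup>2 \<le> 2 * (\<Sum>j<k. if j * b \<le> i then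
      rr g p (i - j * b) * (rr g p (i - j * b) + (1 / gg g p (p - 1)) / real b) else 0)"
proof -
  have "(\<Sum>j<k. xx b i j)\<^sup>2 \<le> 2 * (\<Sum>j<k. xx b i j * (\<Sum>j'<Suc j. xx b i j'))"
    by (rule sq_le) (rule xx_nonneg)
  also have "\<dots> \<le> 2 * (\<Sum>j<k. if j * b \<le> i then
      rr g p (i - j * b) * (rr g p (i - j * b) + (1 / gg g p (p - 1)) / real b) else 0)"
  proof -
    have "(\<Sum>j<k. xx b i j * (\<Sum>j'<Suc j. xx b i j')) \<le> (\<Sum>j<k. if j * b \<le> i then
      rr g p (i - j * b) * (rr g p (i - j * b) + (1 / gg g p (p - 1)) / real b) else 0)"
    proof (rule sum_mono)
      fix j assume "j \<in> {..<k}"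
      show "xx b i j * (\<Sum>j'<Suc j. xx b i j') \<le> (if j * b \<le> i then
          rr g p (i - j * b) * (rr g p (i - j * b) + (1 / gg g p (p - 1)) / real b) else 0)"
      proof (cases "j * b \<le> i")
        case True
        then show ?thesis using inner_bound[OF assms True] rr_nonneg[of "i - j * b"]
          by (simp add: xx_def mult_left_mono)
      next
        case False then show ?thesis by (simp add: xx_def)
      qed
    qed
    then show ?thesis by simp
  qed
  finally show ?thesis .
qed

lemma sq_sum_bound: assumes "p \<le> n"
  shows "(\<Sum>m<n. (rr g p m)\<^sup>2) \<le> (\<Sum>m<p. real (Suc m) powr (2 * g - 2)) + real p powr (g - 1) * (1 / gg g p (p - 1))"
proof -
  have "(\<Sum>m<n. (rr g p m)\<^sup>2) \<le> (\<Sum>m<n. (if m < p then real (Suc m) powr (2 * g - 2) else 0) + real p powr (g - 1) * rr g p m)"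
  proof (rule sum_mono)
    fix m assume "m \<in> {..<n}"
    show "(rr g p m)\<^sup>2 \<le> (if m < p then real (Suc m) powr (2 * g - 2) else 0) + real p powr (g - 1) * rr g p m"
    proof (cases "m < p")
      case True
      have "(rr g p m)\<^sup>2 \<le> (real (Suc m) powr (g - 1))\<^sup>2"
        using rr_head[of m] rr_nonneg[of m] by (simp add: power_mono)
      also have "\<dots> = real (Suc m) powr (2 * g - 2)"
        by (simp add: power2_eq_square powr_add[symmetric])
      moreover have "0 \<le> real p powr (g - 1) * rr g p m" using rr_nonneg[of m] by simp
      ultimately show ?thesis using True by simp
    next
      case False
      then have "rr g p m \<le> real p powr (g - 1)" using rr_tail[of m] by simp
      then have "(rr g p m)\<^sup>2 \<le> real p powr (g - 1) * rr g p m"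
        using rr_nonneg[of m] by (simp add: power2_eq_square mult_right_mono)
      then show ?thesis using False by simp
    qed
  qed
  also have "\<dots> = (\<Sum>m<n. if m < p then real (Suc m) powr (2 * g - 2) else 0) + real p powr (g - 1) * (\<Sum>m<n. rr g p m)"
    by (simp add: sum.distrib sum_distrib_left)
  also have "(\<Sum>m<n. if m < p then real (Suc m) powr (2 * g - 2) else 0) = (\<Sum>m<p. real (Suc m) powr (2 * g - 2))"
  proof -
    have "(\<Sum>m<n. if m < p then real (Suc m) powr (2 * g - 2) else 0) = (\<Sum>m\<in>{..<n} \<inter> {..<p}. real (Suc m) powr (2 * g - 2))"
      unfolding sum.inter_restrict[OF finite_lessThan] by simp
    also have "{..<n} \<inter> {..<p} = {..<p}" using assms by auto
    finally show ?thesis .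
  qed
  also have "real p powr (g - 1) * (\<Sum>m<n. rr g p m) \<le> real p powr (g - 1) * (1 / gg g p (p - 1))"
    by (rule mult_left_mono[OF rr_sum_lt]) simp
  finally show ?thesis by simp
qed

lemma total_bound: assumes "p \<le> n" "1 \<le> b"
  shows "(\<Sum>i<n. (\<Sum>j<k. xx b i j)\<^sup>2) \<le> 2 * real k * ((\<Sum>m<p. real (Suc m) powr (2 * g - 2))
     + real p powr (g - 1) * (1 / gg g p (p - 1)) + (1 / gg g p (p - 1))\<^sup>2 / real b)"
proof -
  define L where "L = 1 / gg g p (p - 1)"
  have L0: "0 \<le> L" using gg_pos[of "p-1"] by (simp add: L_def)
  define psi where "psi m = rr g p m * (rr g p m + L / real b)" for m
  have psi0: "0 \<le> psi m" for m using rr_nonneg[of m] L0 by (simp add: psi_def)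
  have "(\<Sum>i<n. (\<Sum>j<k. xx b i j)\<^sup>2) \<le> (\<Sum>i<n. 2 * (\<Sum>j<k. if j * b \<le> i then psi (i - j * b) else 0))"
    unfolding psi_def L_def by (rule sum_mono) (rule per_i[OF assms(2)])
  also have "\<dots> = 2 * (\<Sum>j<k. \<Sum>i<n. if j * b \<le> i then psi (i - j * b) else 0)"
    by (simp add: sum_distrib_left[symmetric] sum.swap[of _ "{..<k}"])
  also have "\<dots> \<le> 2 * (\<Sum>j<k. \<Sum>m<n. psi m)"
    by (intro mult_left_mono sum_mono shift_sum_le psi0) auto
  also have "\<dots> = 2 * real k * (\<Sum>m<n. psi m)" by simp
  finally have A: "(\<Sum>i<n. (\<Sum>j<k. xx b i j)\<^sup>2) \<le> 2 * real k * (\<Sum>m<n. psi m)" .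
  have "(\<Sum>m<n. psi m) = (\<Sum>m<n. (rr g p m)\<^sup>2) + L / real b * (\<Sum>m<n. rr g p m)"
    by (simp add: psi_def sum.distrib sum_distrib_left power2_eq_square algebra_simps)
  also have "\<dots> \<le> (\<Sum>m<n. (rr g p m)\<^sup>2) + L / real b * L"
  proof -
    have "0 \<le> L / real b" using L0 by simp
    then have "L / real b * (\<Sum>m<n. rr g p m) \<le> L / real b * L"
    proof -
      have "(\<Sum>m<n. rr g p m) \<le> L" using rr_sum_lt[of n] by (simp add: L_def)
      then show ?thesis using \<open>0 \<le> L / real b\<close> by (rule mult_left_mono)
    qed
    then show ?thesis by simp
  qed
  also have "\<dots> \<le> (\<Sum>m<p. real (Suc m) powr (2 * g - 2)) + real p powr (g - 1) * L + L / real b * L"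
    using sq_sum_bound[OF assms(1)] by (simp add: L_def)
  finally have B: "(\<Sum>m<n. psi m) \<le> (\<Sum>m<p. real (Suc m) powr (2 * g - 2)) + real p powr (g - 1) * L + L / real b * L" .
  have "2 * real k * (\<Sum>m<n. psi m) \<le> 2 * real k * ((\<Sum>m<p. real (Suc m) powr (2 * g - 2)) + real p powr (g - 1) * L + L / real b * L)"
    by (rule mult_left_mono[OF B]) simp
  with A have "(\<Sum>i<n. (\<Sum>j<k. xx b i j)\<^sup>2) \<le> 2 * real k * ((\<Sum>m<p. real (Suc m) powr (2 * g - 2)) + real p powr (g - 1) * L + L / real b * L)"
    by linarith
  moreover have eq: "L / real b * L = L\<^sup>2 / real b" by (simp add: power2_eq_square)
  ultimately have "(\<Sum>i<n. (\<Sum>j<k. xx b i j)\<^sup>2) \<le> 2 * real k * ((\<Sum>m<p. real (Suc m) powr (2 * g - 2)) + real p powr (g - 1) * L + L\<^sup>2 / real b)"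
    by (simp only: eq)
  then show ?thesis by (simp only: L_def)
qed


lemma sens_eq: assumes b1: "1 \<le> b" and kb: "real k \<le> real n / real b"
  shows "sens k b (Cmat g p n) = sqrt (\<Sum>i<n. (\<Sum>j<k. xx b i j)\<^sup>2)"
proof -
  have "real k * real b \<le> real n" using kb b1 by (simp add: pos_le_divide_eq)
  then have kbn: "k * b \<le> n" by (metis of_nat_le_iff of_nat_mult)
  have "(\<Sum>i<n. (\<Sum>j<k. Mr g p n $$ (i, j * b))\<^sup>2) = (\<Sum>i<n. (\<Sum>j<k. xx b i j)\<^sup>2)"
  proof (intro sum.cong refl arg_cong[where f = "\<lambda>x. x\<^sup>2"])
    fix i j assume i: "i \<in> {..<n}" and j: "j \<in> {..<k}"
    have "j * b < k * b" using j b1 by simp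
    then have "j * b < n" using kbn by linarith
    then show "Mr g p n $$ (i, j * b) = xx b i j" using i by (simp add: Mr_def xx_def)
  qed
  then show ?thesis by (simp add: sens_def Cmat_eq)
qed

end


lemma comb: fixes S A B :: real assumes "S \<le> 16 * (A\<^sup>2 + B\<^sup>2)" "0 \<le> A" "0 \<le> B"
  shows "sqrt S \<le> 4 * (A + B)"
proof -
  have "(4 * (A + B))\<^sup>2 = 16 * (A\<^sup>2 + B\<^sup>2) + 32 * (A * B)" by (simp add: power2_eq_square algebra_simps)
  moreover have "0 \<le> A * B" using assms by simp
  ultimately have "S \<le> (4 * (A + B))\<^sup>2" using assms(1) by linarith
  then have "sqrt S \<le> sqrt ((4 * (A + B))\<^sup>2)" by (rule real_sqrt_le_mono)
  also have "\<dots> = 4 * (A + B)" using assms by simp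
  finally show ?thesis .
qed

lemma powr_sq: fixes x a :: real shows "(x powr a)\<^sup>2 = x powr (2 * a)"
  by (simp add: power2_eq_square powr_add[symmetric])

lemma case_lt:
  fixes g :: real and p k b :: nat and S :: real
  assumes g0: "0 < g" and g1: "g < 1/2" and p2: "2 \<le> p" and b1: "1 \<le> b"
    and hS: "S \<le> 2 * real k * ((\<Sum>m<p. real (Suc m) powr (2 * g - 2))
         + real p powr (g - 1) * (real p powr g / (1 - g)) + (real p powr g / (1 - g))\<^sup>2 / real b)"
  shows "sqrt S \<le> 4 * (sqrt k / sqrt (1/2 - g) + sqrt (real k / real b) * (real p powr g / g))"
proof (rule comb)
  define D where "D = 1/2 - g"
  have D0: "0 < D" "D < 1/2" using g0 g1 by (auto simp: D_def)
  have P: "(\<Sum>m<p. real (Suc m) powr (2 * g - 2)) \<le> 1 + 1 / (2 * D)"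
  proof -
    have "(\<Sum>m<p. real (Suc m) powr ((2 * g - 1) - 1)) \<le> 1 + (real p powr (2 * g - 1) - 1) / (2 * g - 1)"
      by (rule psum_bound) (use g1 p2 in auto)
    moreover have "(real p powr (2 * g - 1) - 1) / (2 * g - 1) = (1 - real p powr (2 * g - 1)) / (2 * D)"
    proof -
      have "2 * D = - (2 * g - 1)" by (simp add: D_def)
      then show ?thesis by (metis minus_diff_eq minus_divide_divide)
    qed
    moreover have "(1 - real p powr (2 * g - 1)) / (2 * D) \<le> 1 / (2 * D)"
      using D0 by (simp add: divide_right_mono)
    ultimately show ?thesis by (simp add: algebra_simps)
  qed
  have Q: "real p powr (g - 1) * (real p powr g / (1 - g)) \<le> 2"
  proof -
    have "real p powr (g - 1) * real p powr g = real p powr (2 * g - 1)" by (simp add: powr_add[symmetric])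
    also have "\<dots> \<le> 1 powr (2 * g - 1)" using p2 g1 by (intro powr_mono2') auto
    also have "\<dots> = 1" by simp
    finally have "real p powr (g - 1) * real p powr g \<le> 1" .
    moreover have "1 / (1 - g) \<le> 2" using g1 by (simp add: field_simps)
    ultimately have "(real p powr (g - 1) * real p powr g) * (1 / (1 - g)) \<le> 1 * 2"
      using g1 by (intro mult_mono) auto
    then show ?thesis by simp
  qed
  have "1 / (2 * D) \<ge> 1" using D0 by (simp add: field_simps)
  then have PQ: "(\<Sum>m<p. real (Suc m) powr (2 * g - 2)) + real p powr (g - 1) * (real p powr g / (1 - g)) \<le> 2 / D"
  proof -
    have "2 / D = 4 * (1 / (2 * D))" by simp
    then show ?thesis using P Q \<open>1 / (2 * D) \<ge> 1\<close> by linarith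
  qed
  then have T1: "2 * real k * ((\<Sum>m<p. real (Suc m) powr (2 * g - 2)) + real p powr (g - 1) * (real p powr g / (1 - g)))
      \<le> 16 * (sqrt k / sqrt (1/2 - g))\<^sup>2"
  proof -
    have "(sqrt k / sqrt (1/2 - g))\<^sup>2 = real k / D" using D0 by (simp add: power_divide D_def)
    moreover have "2 * real k * ((\<Sum>m<p. real (Suc m) powr (2 * g - 2)) + real p powr (g - 1) * (real p powr g / (1 - g)))
        \<le> 2 * real k * (2 / D)" by (rule mult_left_mono[OF PQ]) simp
    moreover have "2 * real k * (2 / D) \<le> 16 * (real k / D)" using D0 by (simp add: field_simps)
    ultimately show ?thesis by simp
  qed
  have T2: "2 * real k * ((real p powr g / (1 - g))\<^sup>2 / real b) \<le> 16 * (sqrt (real k / real b) * (real p powr g / g))\<^sup>2"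
  proof -
    have "1 / (1 - g) \<le> 2" using g1 by (simp add: field_simps)
    then have "(1 / (1 - g))\<^sup>2 \<le> 2\<^sup>2" using g1 by (intro power_mono) auto
    then have "(1 / (1 - g))\<^sup>2 \<le> 4" by simp
    moreover have "1 \<le> 1 / g" using g0 g1 by simp
    then have "1 \<le> (1 / g)\<^sup>2" by (rule one_le_power)
    ultimately have c: "2 * (1 / (1 - g))\<^sup>2 \<le> 16 * (1 / g)\<^sup>2" by simp
    have "2 * real k * ((real p powr g / (1 - g))\<^sup>2 / real b) = (real k / real b) * (real p powr g)\<^sup>2 * (2 * (1 / (1 - g))\<^sup>2)"
      by (simp add: power_divide field_simps)
    also have "\<dots> \<le> (real k / real b) * (real p powr g)\<^sup>2 * (16 * (1 / g)\<^sup>2)"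
      by (rule mult_left_mono[OF c]) simp
    also have "\<dots> = 16 * (sqrt (real k / real b) * (real p powr g / g))\<^sup>2"
      by (simp add: power_mult_distrib power_divide field_simps)
    finally show ?thesis .
  qed
  show "S \<le> 16 * ((sqrt k / sqrt (1/2 - g))\<^sup>2 + (sqrt (real k / real b) * (real p powr g / g))\<^sup>2)"
    using hS T1 T2 by (simp add: algebra_simps)
qed (use g0 g1 in auto)



lemma case_eq:
  fixes g :: real and p k b :: nat and S :: real
  assumes g: "g = 1/2" and p2: "2 \<le> p" and b1: "1 \<le> b"
    and hS: "S \<le> 2 * real k * ((\<Sum>m<p. real (Suc m) powr (2 * g - 2))
         + real p powr (g - 1) * (real p powr g / (1 - g)) + (real p powr g / (1 - g))\<^sup>2 / real b)"
  shows "sqrt S \<le> 4 * (sqrt (real k * ln (real p)) + sqrt (real k * real p / real b))"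
proof (rule comb)
  have lnp: "2/3 \<le> ln (real p)"
  proof -
    have "ln 2 \<le> ln (real p)" using p2 by simp
    then show ?thesis using ln2_ge_two_thirds by linarith
  qed
  have e: "2 * g - 2 = -1" using g by simp
  have P: "(\<Sum>m<p. real (Suc m) powr (2 * g - 2)) \<le> 1 + ln (real p)"
    using psum_bound0[of p] p2 unfolding e by simp
  have pp: "real p powr (g - 1) * real p powr g = 1"
  proof -
    have "real p powr (g - 1) * real p powr g = real p powr ((g - 1) + g)" by (simp only: powr_add)
    also have "(g - 1) + g = 0" using g by simp
    finally show ?thesis using p2 by simp
  qed
  have Q: "real p powr (g - 1) * (real p powr g / (1 - g)) = 2"
  proof -
    have "real p powr (g - 1) * (real p powr g / (1 - g)) = (real p powr (g - 1) * real p powr g) / (1 - g)"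
      by (simp only: times_divide_eq_right)
    also have "\<dots> = 1 / (1 - g)" by (simp only: pp)
    also have "\<dots> = 2" by (simp add: g)
    finally show ?thesis .
  qed
  have PQ: "(\<Sum>m<p. real (Suc m) powr (2 * g - 2)) + real p powr (g - 1) * (real p powr g / (1 - g)) \<le> 8 * ln (real p)"
    using P Q lnp by linarith
  have T1: "2 * real k * ((\<Sum>m<p. real (Suc m) powr (2 * g - 2)) + real p powr (g - 1) * (real p powr g / (1 - g)))
      \<le> 16 * (sqrt (real k * ln (real p)))\<^sup>2"
  proof -
    have "2 * real k * ((\<Sum>m<p. real (Suc m) powr (2 * g - 2)) + real p powr (g - 1) * (real p powr g / (1 - g)))
        \<le> 2 * real k * (8 * ln (real p))" by (rule mult_left_mono[OF PQ]) simp
    moreover have "(sqrt (real k * ln (real p)))\<^sup>2 = real k * ln (real p)" using lnp by simp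
    ultimately show ?thesis by simp
  qed
  have T2: "2 * real k * ((real p powr g / (1 - g))\<^sup>2 / real b) \<le> 16 * (sqrt (real k * real p / real b))\<^sup>2"
  proof -
    have "(real p powr g)\<^sup>2 = real p" using p2 by (simp add: powr_sq g)
    then have h: "(real p powr g)\<^sup>2 = real p" .
    have "(real p powr g / (1 - g))\<^sup>2 = (real p powr g)\<^sup>2 / (1 - g)\<^sup>2" by (rule power_divide)
    also have "\<dots> = real p / (1 - g)\<^sup>2" by (simp only: h)
    also have "\<dots> = 4 * real p" by (simp add: g power2_eq_square)
    finally have "(real p powr g / (1 - g))\<^sup>2 = 4 * real p" .
    then have "2 * real k * ((real p powr g / (1 - g))\<^sup>2 / real b) = 8 * (real k * real p / real b)" by simp
    moreover have "(sqrt (real k * real p / real b))\<^sup>2 = real k * real p / real b" by simp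
    moreover have "0 \<le> real k * real p / real b" by simp
    ultimately show ?thesis by linarith
  qed
  show "S \<le> 16 * ((sqrt (real k * ln (real p)))\<^sup>2 + (sqrt (real k * real p / real b))\<^sup>2)"
    using hS T1 T2 by (simp add: algebra_simps)
qed (use p2 in \<open>auto intro!: mult_nonneg_nonneg ln_ge_zero\<close>)

lemma case_gt:
  fixes g :: real and p k b :: nat and S :: real
  assumes g0: "1/2 < g" and g1: "g < 1" and p2: "2 \<le> p" and b1: "1 \<le> b"
    and hS: "S \<le> 2 * real k * ((\<Sum>m<p. real (Suc m) powr (2 * g - 2))
         + real p powr (g - 1) * (real p powr g / (1 - g)) + (real p powr g / (1 - g))\<^sup>2 / real b)"
  shows "sqrt S \<le> 4 * (sqrt k * real p powr (g - 1/2) / sqrt ((1 - g) * (g - 1/2))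
               + sqrt (real k / real b) * (real p powr g / (1 - g)))"
proof (rule comb)
  define E where "E = (1 - g) * (g - 1/2)"
  define q where "q = real p powr (2 * g - 1)"
  have E0: "0 < E" using g0 g1 by (simp add: E_def)
  have q0: "0 \<le> q" by (simp add: q_def)
  have P: "(\<Sum>m<p. real (Suc m) powr (2 * g - 2)) \<le> q / (2 * g - 1)"
  proof -
    have "(\<Sum>m<p. real (Suc m) powr ((2 * g - 1) - 1)) \<le> 1 + (real p powr (2 * g - 1) - 1) / (2 * g - 1)"
      by (rule psum_bound) (use g0 g1 p2 in auto)
    moreover have "1 + (q - 1) / (2 * g - 1) = q / (2 * g - 1) + (1 - 1 / (2 * g - 1))"
      using g0 by (simp add: diff_divide_distrib)
    moreover have "1 \<le> 1 / (2 * g - 1)" using g0 g1 by (simp add: field_simps)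
    ultimately show ?thesis by (simp add: q_def algebra_simps)
  qed
  have Q: "real p powr (g - 1) * (real p powr g / (1 - g)) = q / (1 - g)"
  proof -
    have "real p powr (g - 1) * (real p powr g / (1 - g)) = (real p powr (g - 1) * real p powr g) / (1 - g)"
      by (simp only: times_divide_eq_right)
    also have "real p powr (g - 1) * real p powr g = real p powr ((g - 1) + g)" by (simp only: powr_add)
    also have "(g - 1) + g = 2 * g - 1" by simp
    finally show ?thesis by (simp add: q_def)
  qed
  have PQ: "(\<Sum>m<p. real (Suc m) powr (2 * g - 2)) + real p powr (g - 1) * (real p powr g / (1 - g)) \<le> q / E"
  proof -
    have a: "2 * g - 1 \<noteq> 0" "1 - g \<noteq> 0" using g0 g1 by auto
    have e2: "2 * E = (2 * g - 1) * (1 - g)" unfolding E_def by (simp add: algebra_simps divide_simps)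
    have "q / (2 * g - 1) + q / (1 - g) = q * (g / ((2 * g - 1) * (1 - g)))"
      using a by (simp add: field_simps)
    also have "\<dots> = q * (g / (2 * E))" by (simp only: e2)
    also have "\<dots> \<le> q * (1 / E)"
      using g0 g1 E0 q0 by (intro mult_left_mono) (simp_all add: field_simps)
    finally have "q / (2 * g - 1) + q / (1 - g) \<le> q / E" by simp
    then show ?thesis using P Q by linarith
  qed
  have T1: "2 * real k * ((\<Sum>m<p. real (Suc m) powr (2 * g - 2)) + real p powr (g - 1) * (real p powr g / (1 - g)))
      \<le> 16 * (sqrt k * real p powr (g - 1/2) / sqrt ((1 - g) * (g - 1/2)))\<^sup>2"
  proof -
    have "2 * real k * ((\<Sum>m<p. real (Suc m) powr (2 * g - 2)) + real p powr (g - 1) * (real p powr g / (1 - g)))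
        \<le> 2 * real k * (q / E)" by (rule mult_left_mono[OF PQ]) simp
    moreover have "(sqrt k * real p powr (g - 1/2) / sqrt ((1 - g) * (g - 1/2)))\<^sup>2 = real k * q / E"
    proof -
      have "(real p powr (g - 1/2))\<^sup>2 = q" by (simp add: powr_sq q_def algebra_simps)
      moreover have "(sqrt ((1 - g) * (g - 1/2)))\<^sup>2 = E" using E0 by (simp add: E_def)
      ultimately show ?thesis by (simp add: power_divide power_mult_distrib)
    qed
    moreover have "2 * real k * (q / E) = 2 * (real k * q / E)" by simp
    moreover have "0 \<le> real k * q / E" using E0 q0 by simp
    ultimately show ?thesis by linarith
  qed
  have T2: "2 * real k * ((real p powr g / (1 - g))\<^sup>2 / real b) \<le> 16 * (sqrt (real k / real b) * (real p powr g / (1 - g)))\<^sup>2"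
  proof -
    have "(sqrt (real k / real b) * (real p powr g / (1 - g)))\<^sup>2 = real k / real b * (real p powr g / (1 - g))\<^sup>2"
      using real_sqrt_pow2[of "real k / real b"] by (simp only: power_mult_distrib) simp
    moreover have "0 \<le> real k / real b * (real p powr g / (1 - g))\<^sup>2" by simp
    moreover have "2 * real k * ((real p powr g / (1 - g))\<^sup>2 / real b) = 2 * (real k / real b * (real p powr g / (1 - g))\<^sup>2)"
      by simp
    ultimately show ?thesis by linarith
  qed
  show "S \<le> 16 * ((sqrt k * real p powr (g - 1/2) / sqrt ((1 - g) * (g - 1/2)))\<^sup>2
      + (sqrt (real k / real b) * (real p powr g / (1 - g)))\<^sup>2)"
    using hS T1 T2 by (simp add: algebra_simps)
qed (use g0 g1 in auto)


theorem mainTheorem10: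
  shows "\<exists>K::real. \<forall>(\<gamma>::real) (n::nat) (p::nat) (k::nat) (b::nat).
     0 < \<gamma> \<and> \<gamma> < 1 \<and> 2 \<le> p \<and> p \<le> n \<and> 1 \<le> k \<and> 1 \<le> b \<and> real k \<le> real n / real b \<longrightarrow>
     sens k b (Cmat \<gamma> p n) \<le>
       (if \<gamma> < 1/2 then
          K * (sqrt k / sqrt (1/2 - \<gamma>) + sqrt (real k / real b) * (real p powr \<gamma> / \<gamma>))
        else if \<gamma> = 1/2 then
          K * (sqrt (real k * ln (real p)) + sqrt (real k * real p / real b))
        else
          K * (sqrt k * real p powr (\<gamma> - 1/2) / sqrt ((1 - \<gamma>) * (\<gamma> - 1/2))
               + sqrt (real k / real b) * (real p powr \<gamma> / (1 - \<gamma>))))"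
proof (intro exI[of _ 4] allI impI)
  fix g :: real and n p k b :: nat
  assume H: "0 < g \<and> g < 1 \<and> 2 \<le> p \<and> p \<le> n \<and> 1 \<le> k \<and> 1 \<le> b \<and> real k \<le> real n / real b"
  then have g0: "0 < g" and g1: "g < 1" and p2: "2 \<le> p" and pn: "p \<le> n" and b1: "1 \<le> b"
    and kb: "real k \<le> real n / real b" by auto
  define S where "S = (\<Sum>i<n. (\<Sum>j<k. xx g p b i j)\<^sup>2)"
  define P where "P = (\<Sum>m<p. real (Suc m) powr (2 * g - 2))"
  define L where "L = 1 / gg g p (p - 1)"
  define Lb where "Lb = real p powr g / (1 - g)"
  have sens: "sens k b (Cmat g p n) = sqrt S"
    unfolding S_def by (rule sens_eq[OF g0 g1 p2 b1 kb])
  have S1: "S \<le> 2 * real k * (P + real p powr (g - 1) * L + L\<^sup>2 / real b)"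
    unfolding S_def P_def L_def by (rule total_bound[OF g0 g1 p2 pn b1])
  have L0: "0 \<le> L" using gg_pos[OF g0 g1 p2, of "p - 1"] by (simp add: L_def)
  have LL: "L \<le> Lb" unfolding L_def Lb_def by (rule L_bound[OF g0 g1 p2])
  have "real p powr (g - 1) * L \<le> real p powr (g - 1) * Lb" using LL by (simp add: mult_left_mono)
  moreover have "L\<^sup>2 / real b \<le> Lb\<^sup>2 / real b"
    using LL L0 by (intro divide_right_mono power_mono) auto
  ultimately have "P + real p powr (g - 1) * L + L\<^sup>2 / real b \<le> P + real p powr (g - 1) * Lb + Lb\<^sup>2 / real b"
    by linarith
  then have "2 * real k * (P + real p powr (g - 1) * L + L\<^sup>2 / real b) \<le> 2 * real k * (P + real p powr (g - 1) * Lb + Lb\<^sup>2 / real b)"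
    by (rule mult_left_mono) simp
  with S1 have hS: "S \<le> 2 * real k * ((\<Sum>m<p. real (Suc m) powr (2 * g - 2))
         + real p powr (g - 1) * (real p powr g / (1 - g)) + (real p powr g / (1 - g))\<^sup>2 / real b)"
    unfolding P_def Lb_def by linarith
  consider (lt) "g < 1/2" | (eq) "g = 1/2" | (gt) "1/2 < g" by linarith
  then show "sens k b (Cmat g p n) \<le>
       (if g < 1/2 then
          4 * (sqrt k / sqrt (1/2 - g) + sqrt (real k / real b) * (real p powr g / g))
        else if g = 1/2 then
          4 * (sqrt (real k * ln (real p)) + sqrt (real k * real p / real b))
        else
          4 * (sqrt k * real p powr (g - 1/2) / sqrt ((1 - g) * (g - 1/2))
               + sqrt (real k / real b) * (real p powr g / (1 - g))))"
  proof cases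
    case lt
    then show ?thesis using case_lt[OF g0 lt p2 b1 hS] by (simp add: sens)
  next
    case eq
    then show ?thesis using case_eq[OF eq p2 b1 hS] by (simp add: sens)
  next
    case gt
    then show ?thesis using case_gt[OF gt g1 p2 b1 hS] by (simp add: sens)
  qed
qed


end
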